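(* For integers $1<k<n$, $f_n(\{k,k+1,\dots,n-1\})=2^{n-1}$.
   Context: For $m\ge1$ and a set $B$ of positive integers, $f_m(B)$ denotes the number of linear orders $q$ on $[m]$ such that for every triple $i<j<k$ in $[m]$: if $j\in B$ then $i$ is not ranked last among $\{i,j,k\}$ in $q$, and if $j\notin B$ then $k$ is not ranked first among $\{i,j,k\}$ in $q$. *)

theory Defs
  imports Main
begin

text \<open>A linear order q on [m] = {1..m} is a relation r with linear_order_on {1..m} r;
  (x,y) in r means x is ranked no later than y (x comes before y).
  "ranked first" = minimal, "ranked last" = maximal among the triple.\<close>

definition ranked_last :: "nat rel \<Rightarrow> nat \<Rightarrow> nat \<Rightarrow> nat \<Rightarrow> bool" where
  "ranked_last r x y z \<longleftrightarrow> (y, x) \<in> r \<and> (z, x) \<in> r"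

definition ranked_first :: "nat rel \<Rightarrow> nat \<Rightarrow> nat \<Rightarrow> nat \<Rightarrow> bool" where
  "ranked_first r x y z \<longleftrightarrow> (x, y) \<in> r \<and> (x, z) \<in> r"

definition good_order :: "nat \<Rightarrow> nat set \<Rightarrow> nat rel \<Rightarrow> bool" where
  "good_order m B r \<longleftrightarrow> linear_order_on {1..m} r \<and>
     (\<forall>i j k. 1 \<le> i \<and> i < j \<and> j < k \<and> k \<le> m \<longrightarrow>
        (j \<in> B \<longrightarrow> \<not> ranked_last r i j k) \<and>
        (j \<notin> B \<longrightarrow> \<not> ranked_first r k i j))"

definition f :: "nat \<Rightarrow> nat set \<Rightarrow> nat" where
  "f m B = card {r. good_order m B r}"

end

theory Submission
  imports Defs
begin

definition lin :: "nat set \<Rightarrow> nat rel \<Rightarrow> bool" where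
  "lin A r \<longleftrightarrow> r \<subseteq> A \<times> A \<and> (\<forall>x\<in>A. (x,x) \<in> r) \<and>
     (\<forall>x y z. (x,y) \<in> r \<longrightarrow> (y,z) \<in> r \<longrightarrow> (x,z) \<in> r) \<and>
     (\<forall>x y. (x,y) \<in> r \<longrightarrow> (y,x) \<in> r \<longrightarrow> x = y) \<and>
     (\<forall>x\<in>A. \<forall>y\<in>A. (x,y) \<in> r \<or> (y,x) \<in> r)"

lemma lin_iff: "linear_order_on A r \<longleftrightarrow> lin A r"
proof
  assume L: "linear_order_on A r"
  have p: "refl_on A r" "trans r" "antisym r" "r \<subseteq> A \<times> A"
    using L unfolding linear_order_on_def by (auto dest: partial_order_onD)
  have t: "total_on A r" using L unfolding linear_order_on_def by blast
  show "lin A r" unfolding lin_def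
  proof (intro conjI ballI allI impI)
    show "r \<subseteq> A \<times> A" by (rule p(4))
  next
    fix x assume "x \<in> A" then show "(x,x) \<in> r" using refl_onD[OF p(1)] by blast
  next
    fix x y z assume "(x,y) \<in> r" "(y,z) \<in> r" then show "(x,z) \<in> r" using transD[OF p(2)] by blast
  next
    fix x y assume "(x,y) \<in> r" "(y,x) \<in> r" then show "x = y" using antisymD[OF p(3)] by blast
  next
    fix x y assume "x \<in> A" "y \<in> A" then show "(x,y) \<in> r \<or> (y,x) \<in> r"
      using t refl_onD[OF p(1)] unfolding total_on_def by metis
  qed
next
  assume L: "lin A r"
  have "refl_on A r" by (rule refl_onI) (use L in \<open>simp add: lin_def\<close>)
  moreover have "trans r" by (rule transI) (use L in \<open>unfold lin_def, blast\<close>)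
  moreover have "antisym r" by (rule antisymI) (use L in \<open>unfold lin_def, blast\<close>)
  moreover have "total_on A r" by (rule total_onI) (use L in \<open>unfold lin_def, blast\<close>)
  moreover have "r \<subseteq> A \<times> A" using L unfolding lin_def by blast
  ultimately show "linear_order_on A r"
    unfolding linear_order_on_def partial_order_on_def preorder_on_def by blast
qed

lemma linD_sub: "lin A r \<Longrightarrow> (a,b) \<in> r \<Longrightarrow> a \<in> A \<and> b \<in> A"
  unfolding lin_def by blast
lemma linD_sub': "lin A r \<Longrightarrow> r \<subseteq> A \<times> A"
  unfolding lin_def by blast
lemma linD_refl: "lin A r \<Longrightarrow> a \<in> A \<Longrightarrow> (a,a) \<in> r"
  unfolding lin_def by blast
lemma linD_trans: "lin A r \<Longrightarrow> (a,b) \<in> r \<Longrightarrow> (b,c) \<in> r \<Longrightarrow> (a,c) \<in> r"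
  unfolding lin_def by blast
lemma linD_antisym: "lin A r \<Longrightarrow> (a,b) \<in> r \<Longrightarrow> (b,a) \<in> r \<Longrightarrow> a = b"
  unfolding lin_def by blast
lemma linD_total: "lin A r \<Longrightarrow> a \<in> A \<Longrightarrow> b \<in> A \<Longrightarrow> (a,b) \<in> r \<or> (b,a) \<in> r"
  unfolding lin_def by blast
lemma linI:
  assumes "r \<subseteq> A \<times> A" "\<And>a. a \<in> A \<Longrightarrow> (a,a) \<in> r"
    "\<And>a b c. (a,b) \<in> r \<Longrightarrow> (b,c) \<in> r \<Longrightarrow> (a,c) \<in> r"
    "\<And>a b. (a,b) \<in> r \<Longrightarrow> (b,a) \<in> r \<Longrightarrow> a = b"
    "\<And>a b. a \<in> A \<Longrightarrow> b \<in> A \<Longrightarrow> (a,b) \<in> r \<or> (b,a) \<in> r"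
  shows "lin A r"
  unfolding lin_def using assms by blast

definition tri :: "nat set \<Rightarrow> nat set \<Rightarrow> nat rel \<Rightarrow> bool" where
  "tri A B r \<longleftrightarrow> (\<forall>i\<in>A. \<forall>j\<in>A. \<forall>k\<in>A. i < j \<longrightarrow> j < k \<longrightarrow>
      (j \<in> B \<longrightarrow> \<not> ((j,i) \<in> r \<and> (k,i) \<in> r)) \<and>
      (j \<notin> B \<longrightarrow> \<not> ((k,i) \<in> r \<and> (k,j) \<in> r)))"

definition goodA :: "nat set \<Rightarrow> nat set \<Rightarrow> nat rel \<Rightarrow> bool" where
  "goodA A B r \<longleftrightarrow> lin A r \<and> tri A B r"

lemma triD1: "tri A B r \<Longrightarrow> i \<in> A \<Longrightarrow> j \<in> A \<Longrightarrow> k \<in> A \<Longrightarrow> i < j \<Longrightarrow> j < k \<Longrightarrow> j \<in> B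
  \<Longrightarrow> (j,i) \<in> r \<Longrightarrow> (k,i) \<in> r \<Longrightarrow> False"
  unfolding tri_def by blast
lemma triD2: "tri A B r \<Longrightarrow> i \<in> A \<Longrightarrow> j \<in> A \<Longrightarrow> k \<in> A \<Longrightarrow> i < j \<Longrightarrow> j < k \<Longrightarrow> j \<notin> B
  \<Longrightarrow> (k,i) \<in> r \<Longrightarrow> (k,j) \<in> r \<Longrightarrow> False"
  unfolding tri_def by blast
lemma triI:
  assumes "\<And>i j k. i \<in> A \<Longrightarrow> j \<in> A \<Longrightarrow> k \<in> A \<Longrightarrow> i < j \<Longrightarrow> j < k \<Longrightarrow> j \<in> B
       \<Longrightarrow> (j,i) \<in> r \<Longrightarrow> (k,i) \<in> r \<Longrightarrow> False"
    "\<And>i j k. i \<in> A \<Longrightarrow> j \<in> A \<Longrightarrow> k \<in> A \<Longrightarrow> i < j \<Longrightarrow> j < k \<Longrightarrow> j \<notin> B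
       \<Longrightarrow> (k,i) \<in> r \<Longrightarrow> (k,j) \<in> r \<Longrightarrow> False"
  shows "tri A B r"
  unfolding tri_def using assms by blast

definition cnt :: "nat set \<Rightarrow> nat set \<Rightarrow> nat" where
  "cnt A B = card {r. goodA A B r}"

lemma good_order_iff: "good_order n B r \<longleftrightarrow> goodA {1..n} B r"
proof -
  have "(\<forall>i j k. 1 \<le> i \<and> i < j \<and> j < k \<and> k \<le> n \<longrightarrow>
        (j \<in> B \<longrightarrow> \<not> ranked_last r i j k) \<and> (j \<notin> B \<longrightarrow> \<not> ranked_first r k i j))
     \<longleftrightarrow> tri {1..n} B r"
  proof
    assume H: "\<forall>i j k. 1 \<le> i \<and> i < j \<and> j < k \<and> k \<le> n \<longrightarrow>
        (j \<in> B \<longrightarrow> \<not> ranked_last r i j k) \<and> (j \<notin> B \<longrightarrow> \<not> ranked_first r k i j)"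
    show "tri {1..n} B r"
    proof (rule triI)
      fix i j k assume "i \<in> {1..n}" "j \<in> {1..n}" "k \<in> {1..n}" "i < j" "j < k" "j \<in> B"
        "(j,i) \<in> r" "(k,i) \<in> r"
      then show False using spec[OF spec[OF spec[OF H, of i], of j], of k] unfolding ranked_last_def by simp
    next
      fix i j k assume "i \<in> {1..n}" "j \<in> {1..n}" "k \<in> {1..n}" "i < j" "j < k" "j \<notin> B"
        "(k,i) \<in> r" "(k,j) \<in> r"
      then show False using spec[OF spec[OF spec[OF H, of i], of j], of k] unfolding ranked_first_def by simp
    qed
  next
    assume T: "tri {1..n} B r"
    show "\<forall>i j k. 1 \<le> i \<and> i < j \<and> j < k \<and> k \<le> n \<longrightarrow>
        (j \<in> B \<longrightarrow> \<not> ranked_last r i j k) \<and> (j \<notin> B \<longrightarrow> \<not> ranked_first r k i j)"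
    proof (intro allI impI conjI)
      fix i j k assume a: "1 \<le> i \<and> i < j \<and> j < k \<and> k \<le> n"
      then have m: "i \<in> {1..n}" "j \<in> {1..n}" "k \<in> {1..n}" "i < j" "j < k" by auto
      show "j \<in> B \<Longrightarrow> \<not> ranked_last r i j k"
        unfolding ranked_last_def using triD1[OF T m] by blast
      show "j \<notin> B \<Longrightarrow> \<not> ranked_first r k i j"
        unfolding ranked_first_def using triD2[OF T m] by blast
    qed
  qed
  moreover have "good_order n B r \<longleftrightarrow> linear_order_on {1..n} r \<and> (\<forall>i j k. 1 \<le> i \<and> i < j \<and> j < k \<and> k \<le> n \<longrightarrow>
        (j \<in> B \<longrightarrow> \<not> ranked_last r i j k) \<and> (j \<notin> B \<longrightarrow> \<not> ranked_first r k i j))"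
    by (rule good_order_def)
  ultimately show ?thesis by (simp only: goodA_def lin_iff)
qed

lemma fin_good: "finite A \<Longrightarrow> finite {r. goodA A B r}"
  by (rule finite_subset[of _ "Pow (A \<times> A)"]) (auto simp: goodA_def dest: linD_sub')

lemma restrict_lin:
  assumes l: "lin A r" and A': "A' \<subseteq> A"
  shows "lin A' (r \<inter> A' \<times> A')"
proof (rule linI)
  show "r \<inter> A' \<times> A' \<subseteq> A' \<times> A'" by blast
next
  fix a assume "a \<in> A'" then show "(a,a) \<in> r \<inter> A' \<times> A'" using linD_refl[OF l] A' by blast
next
  fix a b c assume "(a,b) \<in> r \<inter> A' \<times> A'" "(b,c) \<in> r \<inter> A' \<times> A'"
  then show "(a,c) \<in> r \<inter> A' \<times> A'" using linD_trans[OF l] by blast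
next
  fix a b assume "(a,b) \<in> r \<inter> A' \<times> A'" "(b,a) \<in> r \<inter> A' \<times> A'"
  then show "a = b" using linD_antisym[OF l] by blast
next
  fix a b assume "a \<in> A'" "b \<in> A'"
  then show "(a,b) \<in> r \<inter> A' \<times> A' \<or> (b,a) \<in> r \<inter> A' \<times> A'" using linD_total[OF l] A' by blast
qed

lemma restrict_good:
  assumes "goodA A B r" "A' \<subseteq> A"
  shows "goodA A' B (r \<inter> A' \<times> A')"
proof -
  have l: "lin A r" and t: "tri A B r" using assms unfolding goodA_def by blast+
  have "lin A' (r \<inter> A' \<times> A')" using restrict_lin[OF l assms(2)] .
  moreover have "tri A' B (r \<inter> A' \<times> A')"
  proof (rule triI)
    fix i j k assume "i \<in> A'" "j \<in> A'" "k \<in> A'" "i < j" "j < k" "j \<in> B"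
      "(j,i) \<in> r \<inter> A' \<times> A'" "(k,i) \<in> r \<inter> A' \<times> A'"
    then show False using triD1[OF t, of i j k] assms(2) by blast
  next
    fix i j k assume "i \<in> A'" "j \<in> A'" "k \<in> A'" "i < j" "j < k" "j \<notin> B"
      "(k,i) \<in> r \<inter> A' \<times> A'" "(k,j) \<in> r \<inter> A' \<times> A'"
    then show False using triD2[OF t, of i j k] assms(2) by blast
  qed
  ultimately show ?thesis unfolding goodA_def by blast
qed

lemma goodA_lin: "goodA A B r \<Longrightarrow> lin A r"
  unfolding goodA_def by blast
lemma goodA_tri: "goodA A B r \<Longrightarrow> tri A B r"
  unfolding goodA_def by blast

lemma has_max:
  assumes "finite A" "A \<noteq> {}" "lin A r"
  shows "\<exists>x\<in>A. \<forall>y\<in>A. (y,x) \<in> r"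
  using assms
proof (induction A arbitrary: r rule: finite_ne_induct)
  case (singleton x)
  then show ?case using linD_refl by blast
next
  case (insert z F)
  have l: "lin F (r \<inter> F \<times> F)"
    using restrict_lin[OF insert.prems, of F] by blast
  obtain x where x: "x \<in> F" "\<forall>y\<in>F. (y,x) \<in> r \<inter> F \<times> F" using insert.IH[OF l] by blast
  show ?case
  proof (cases "(x,z) \<in> r")
    case True
    then show ?thesis using x linD_trans[OF insert.prems] linD_refl[OF insert.prems] by blast
  next
    case False
    then have "(z,x) \<in> r" using linD_total[OF insert.prems, of x z] x by blast
    then show ?thesis using x by blast
  qed
qed

lemma has_min:
  assumes "finite A" "A \<noteq> {}" "lin A r"
  shows "\<exists>x\<in>A. \<forall>y\<in>A. (x,y) \<in> r"
  using assms
proof (induction A arbitrary: r rule: finite_ne_induct)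
  case (singleton x)
  then show ?case using linD_refl by blast
next
  case (insert z F)
  have l: "lin F (r \<inter> F \<times> F)"
    using restrict_lin[OF insert.prems, of F] by blast
  obtain x where x: "x \<in> F" "\<forall>y\<in>F. (x,y) \<in> r \<inter> F \<times> F" using insert.IH[OF l] by blast
  show ?case
  proof (cases "(z,x) \<in> r")
    case True
    then show ?thesis using x linD_trans[OF insert.prems] linD_refl[OF insert.prems] by blast
  next
    case False
    then have "(x,z) \<in> r" using linD_total[OF insert.prems, of x z] x by blast
    then show ?thesis using x by blast
  qed
qed

lemma card_last:
  assumes "finite A" "x \<in> A"
    and ext: "\<And>r'. goodA (A - {x}) B r' \<Longrightarrow> goodA A B (r' \<union> A \<times> {x})"
  shows "card {r. goodA A B r \<and> (\<forall>y\<in>A. (y,x) \<in> r)} = cnt (A - {x}) B"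
proof -
  let ?g = "\<lambda>r'. r' \<union> A \<times> {x}"
  have eq: "{r. goodA A B r \<and> (\<forall>y\<in>A. (y,x) \<in> r)} = ?g ` {r'. goodA (A - {x}) B r'}"
  proof
    show "?g ` {r'. goodA (A - {x}) B r'} \<subseteq> {r. goodA A B r \<and> (\<forall>y\<in>A. (y,x) \<in> r)}"
      using ext by blast
  next
    show "{r. goodA A B r \<and> (\<forall>y\<in>A. (y,x) \<in> r)} \<subseteq> ?g ` {r'. goodA (A - {x}) B r'}"
    proof
      fix r assume r: "r \<in> {r. goodA A B r \<and> (\<forall>y\<in>A. (y,x) \<in> r)}"
      then have gr: "goodA A B r" and lst: "\<forall>y\<in>A. (y,x) \<in> r" by blast+
      have l: "lin A r" using goodA_lin[OF gr] .
      let ?r' = "r \<inter> (A - {x}) \<times> (A - {x})"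
      have g: "goodA (A - {x}) B ?r'" using restrict_good[OF gr, of "A - {x}"] by blast
      have "r = ?g ?r'"
      proof
        show "r \<subseteq> ?g ?r'"
        proof
          fix p assume p: "p \<in> r"
          obtain a b where ab: "p = (a,b)" by (cases p)
          have ab2: "a \<in> A" "b \<in> A" using linD_sub[OF l] p ab by blast+
          have "a = x \<Longrightarrow> b = x" using linD_antisym[OF l, of b x] lst ab2 p ab by blast
          then show "p \<in> ?g ?r'" using p ab ab2 by blast
        qed
      next
        show "?g ?r' \<subseteq> r" using lst by blast
      qed
      then show "r \<in> ?g ` {r'. goodA (A - {x}) B r'}" using g by blast
    qed
  qed
  have inj: "inj_on ?g {r'. goodA (A - {x}) B r'}"
  proof (rule inj_onI)
    fix r1 r2 assume a: "r1 \<in> {r'. goodA (A - {x}) B r'}" "r2 \<in> {r'. goodA (A - {x}) B r'}"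
      "?g r1 = ?g r2"
    have s1: "r1 \<subseteq> (A - {x}) \<times> (A - {x})" using a(1) goodA_lin linD_sub' by blast
    have s2: "r2 \<subseteq> (A - {x}) \<times> (A - {x})" using a(2) goodA_lin linD_sub' by blast
    have "r1 = ?g r1 \<inter> (A - {x}) \<times> (A - {x})" using s1 by blast
    also have "\<dots> = ?g r2 \<inter> (A - {x}) \<times> (A - {x})" using a(3) by simp
    also have "\<dots> = r2" using s2 by blast
    finally show "r1 = r2" .
  qed
  show ?thesis unfolding eq cnt_def using card_image[OF inj] .
qed

lemma card_first:
  assumes "finite A" "x \<in> A"
    and ext: "\<And>r'. goodA (A - {x}) B r' \<Longrightarrow> goodA A B (r' \<union> {x} \<times> A)"
  shows "card {r. goodA A B r \<and> (\<forall>y\<in>A. (x,y) \<in> r)} = cnt (A - {x}) B"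
proof -
  let ?g = "\<lambda>r'. r' \<union> {x} \<times> A"
  have eq: "{r. goodA A B r \<and> (\<forall>y\<in>A. (x,y) \<in> r)} = ?g ` {r'. goodA (A - {x}) B r'}"
  proof
    show "?g ` {r'. goodA (A - {x}) B r'} \<subseteq> {r. goodA A B r \<and> (\<forall>y\<in>A. (x,y) \<in> r)}"
      using ext by blast
  next
    show "{r. goodA A B r \<and> (\<forall>y\<in>A. (x,y) \<in> r)} \<subseteq> ?g ` {r'. goodA (A - {x}) B r'}"
    proof
      fix r assume r: "r \<in> {r. goodA A B r \<and> (\<forall>y\<in>A. (x,y) \<in> r)}"
      then have gr: "goodA A B r" and lst: "\<forall>y\<in>A. (x,y) \<in> r" by blast+
      have l: "lin A r" using goodA_lin[OF gr] .
      let ?r' = "r \<inter> (A - {x}) \<times> (A - {x})"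
      have g: "goodA (A - {x}) B ?r'" using restrict_good[OF gr, of "A - {x}"] by blast
      have "r = ?g ?r'"
      proof
        show "r \<subseteq> ?g ?r'"
        proof
          fix p assume p: "p \<in> r"
          obtain a b where ab: "p = (a,b)" by (cases p)
          have ab2: "a \<in> A" "b \<in> A" using linD_sub[OF l] p ab by blast+
          have "b = x \<Longrightarrow> a = x" using linD_antisym[OF l, of a x] lst ab2 p ab by blast
          then show "p \<in> ?g ?r'" using p ab ab2 by blast
        qed
      next
        show "?g ?r' \<subseteq> r" using lst by blast
      qed
      then show "r \<in> ?g ` {r'. goodA (A - {x}) B r'}" using g by blast
    qed
  qed
  have inj: "inj_on ?g {r'. goodA (A - {x}) B r'}"
  proof (rule inj_onI)
    fix r1 r2 assume a: "r1 \<in> {r'. goodA (A - {x}) B r'}" "r2 \<in> {r'. goodA (A - {x}) B r'}"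
      "?g r1 = ?g r2"
    have s1: "r1 \<subseteq> (A - {x}) \<times> (A - {x})" using a(1) goodA_lin linD_sub' by blast
    have s2: "r2 \<subseteq> (A - {x}) \<times> (A - {x})" using a(2) goodA_lin linD_sub' by blast
    have "r1 = ?g r1 \<inter> (A - {x}) \<times> (A - {x})" using s1 by blast
    also have "\<dots> = ?g r2 \<inter> (A - {x}) \<times> (A - {x})" using a(3) by simp
    also have "\<dots> = r2" using s2 by blast
    finally show "r1 = r2" .
  qed
  show ?thesis unfolding eq cnt_def using card_image[OF inj] .
qed

lemma lin_ext_last:
  assumes l: "lin (A - {x}) r'" and x: "x \<in> A"
  shows "lin A (r' \<union> A \<times> {x})"
proof -
  have s: "r' \<subseteq> (A - {x}) \<times> (A - {x})" using linD_sub'[OF l] .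
  show ?thesis
  proof (rule linI)
    show "r' \<union> A \<times> {x} \<subseteq> A \<times> A" using s x by blast
  next
    fix a assume "a \<in> A" then show "(a,a) \<in> r' \<union> A \<times> {x}" using linD_refl[OF l, of a] by blast
  next
    fix a b c assume "(a,b) \<in> r' \<union> A \<times> {x}" "(b,c) \<in> r' \<union> A \<times> {x}"
    then show "(a,c) \<in> r' \<union> A \<times> {x}" using s linD_trans[OF l, of a b c] by blast
  next
    fix a b assume "(a,b) \<in> r' \<union> A \<times> {x}" "(b,a) \<in> r' \<union> A \<times> {x}"
    then show "a = b" using s linD_antisym[OF l, of a b] by blast
  next
    fix a b assume "a \<in> A" "b \<in> A"
    then show "(a,b) \<in> r' \<union> A \<times> {x} \<or> (b,a) \<in> r' \<union> A \<times> {x}"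
      using linD_total[OF l, of a b] by blast
  qed
qed

lemma lin_ext_first:
  assumes l: "lin (A - {x}) r'" and x: "x \<in> A"
  shows "lin A (r' \<union> {x} \<times> A)"
proof -
  have s: "r' \<subseteq> (A - {x}) \<times> (A - {x})" using linD_sub'[OF l] .
  show ?thesis
  proof (rule linI)
    show "r' \<union> {x} \<times> A \<subseteq> A \<times> A" using s x by blast
  next
    fix a assume "a \<in> A" then show "(a,a) \<in> r' \<union> {x} \<times> A" using linD_refl[OF l, of a] by blast
  next
    fix a b c assume "(a,b) \<in> r' \<union> {x} \<times> A" "(b,c) \<in> r' \<union> {x} \<times> A"
    then show "(a,c) \<in> r' \<union> {x} \<times> A" using s linD_trans[OF l, of a b c] by blast
  next
    fix a b assume "(a,b) \<in> r' \<union> {x} \<times> A" "(b,a) \<in> r' \<union> {x} \<times> A"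
    then show "a = b" using s linD_antisym[OF l, of a b] by blast
  next
    fix a b assume "a \<in> A" "b \<in> A"
    then show "(a,b) \<in> r' \<union> {x} \<times> A \<or> (b,a) \<in> r' \<union> {x} \<times> A"
      using linD_total[OF l, of a b] by blast
  qed
qed

lemma ext_last_good:
  assumes g: "goodA (A - {x}) B r'" and x: "x \<in> A"
    and c1: "\<And>j k. j \<in> A \<Longrightarrow> k \<in> A \<Longrightarrow> x < j \<Longrightarrow> j < k \<Longrightarrow> False"
    and c2: "\<And>i k. i \<in> A \<Longrightarrow> k \<in> A \<Longrightarrow> i < x \<Longrightarrow> x < k \<Longrightarrow> x \<in> B"
  shows "goodA A B (r' \<union> A \<times> {x})"
proof -
  have l: "lin (A - {x}) r'" and t: "tri (A - {x}) B r'" using g unfolding goodA_def by blast+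
  have s: "r' \<subseteq> (A - {x}) \<times> (A - {x})" using linD_sub'[OF l] .
  have "tri A B (r' \<union> A \<times> {x})"
  proof (rule triI)
    fix i j k assume a: "i \<in> A" "j \<in> A" "k \<in> A" "i < j" "j < k" "j \<in> B"
      "(j,i) \<in> r' \<union> A \<times> {x}" "(k,i) \<in> r' \<union> A \<times> {x}"
    show False
    proof (cases "i = x")
      case True then show False using c1[of j k] a by blast
    next
      case False
      then have "(j,i) \<in> r'" "(k,i) \<in> r'" using a by blast+
      then show False using triD1[OF t, of i j k] s a by blast
    qed
  next
    fix i j k assume a: "i \<in> A" "j \<in> A" "k \<in> A" "i < j" "j < k" "j \<notin> B"
      "(k,i) \<in> r' \<union> A \<times> {x}" "(k,j) \<in> r' \<union> A \<times> {x}"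
    show False
    proof (cases "i = x")
      case True then show False using c1[of j k] a by blast
    next
      case False
      show False
      proof (cases "j = x")
        case True then show False using c2[of i k] a by blast
      next
        case False
        then have "(k,i) \<in> r'" "(k,j) \<in> r'" using a \<open>i \<noteq> x\<close> by blast+
        then show False using triD2[OF t, of i j k] s a by blast
      qed
    qed
  qed
  then show ?thesis unfolding goodA_def using lin_ext_last[OF l x] by blast
qed

lemma ext_first_good:
  assumes g: "goodA (A - {x}) B r'" and x: "x \<in> A"
    and c1: "\<And>i j. i \<in> A \<Longrightarrow> j \<in> A \<Longrightarrow> i < j \<Longrightarrow> j < x \<Longrightarrow> False"
    and c2: "\<And>i k. i \<in> A \<Longrightarrow> k \<in> A \<Longrightarrow> i < x \<Longrightarrow> x < k \<Longrightarrow> x \<notin> B"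
  shows "goodA A B (r' \<union> {x} \<times> A)"
proof -
  have l: "lin (A - {x}) r'" and t: "tri (A - {x}) B r'" using g unfolding goodA_def by blast+
  have s: "r' \<subseteq> (A - {x}) \<times> (A - {x})" using linD_sub'[OF l] .
  have "tri A B (r' \<union> {x} \<times> A)"
  proof (rule triI)
    fix i j k assume a: "i \<in> A" "j \<in> A" "k \<in> A" "i < j" "j < k" "j \<in> B"
      "(j,i) \<in> r' \<union> {x} \<times> A" "(k,i) \<in> r' \<union> {x} \<times> A"
    show False
    proof (cases "k = x")
      case True then show False using c1[of i j] a by blast
    next
      case False
      show False
      proof (cases "j = x")
        case True then show False using c2[of i k] a by blast
      next
        case False
        then have "(j,i) \<in> r'" "(k,i) \<in> r'" using a \<open>k \<noteq> x\<close> by blast+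
        then show False using triD1[OF t, of i j k] s a by blast
      qed
    qed
  next
    fix i j k assume a: "i \<in> A" "j \<in> A" "k \<in> A" "i < j" "j < k" "j \<notin> B"
      "(k,i) \<in> r' \<union> {x} \<times> A" "(k,j) \<in> r' \<union> {x} \<times> A"
    show False
    proof (cases "k = x")
      case True then show False using c1[of i j] a by blast
    next
      case False
      then have "(k,i) \<in> r'" "(k,j) \<in> r'" using a by blast+
      then show False using triD2[OF t, of i j k] s a by blast
    qed
  qed
  then show ?thesis unfolding goodA_def using lin_ext_first[OF l x] by blast
qed

lemma L1:
  assumes fin: "finite A" and a1: "a1 \<in> A" "\<And>y. y \<in> A \<Longrightarrow> y \<le> a1"
    and a2: "a2 \<in> A" "a2 < a1" "\<And>y. y \<in> A \<Longrightarrow> y \<noteq> a1 \<Longrightarrow> y \<le> a2"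
    and H: "\<And>y. y \<in> A \<Longrightarrow> y < a2 \<Longrightarrow> a2 \<in> B"
  shows "cnt A B = cnt (A - {a1}) B + cnt (A - {a2}) B"
proof -
  let ?S = "\<lambda>x. {r. goodA A B r \<and> (\<forall>y\<in>A. (y,x) \<in> r)}"
  have split: "{r. goodA A B r} = ?S a1 \<union> ?S a2"
  proof
    show "{r. goodA A B r} \<subseteq> ?S a1 \<union> ?S a2"
    proof
      fix r assume "r \<in> {r. goodA A B r}"
      then have g: "goodA A B r" by blast
      have "A \<noteq> {}" using a1 by blast
      then obtain x where x: "x \<in> A" "\<forall>y\<in>A. (y,x) \<in> r" using has_max[OF fin _ goodA_lin[OF g]] by blast
      have "x = a1 \<or> x = a2"
      proof (rule ccontr)
        assume "\<not> (x = a1 \<or> x = a2)"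
        then have "x < a2" using a2(3)[OF x(1)] by linarith
        then have "a2 \<in> B" using H x(1) by blast
        then show False using triD1[OF goodA_tri[OF g] x(1) a2(1) a1(1) \<open>x < a2\<close> a2(2)] x a1 a2 by blast
      qed
      then show "r \<in> ?S a1 \<union> ?S a2" using g x by blast
    qed
  qed blast
  have disj: "?S a1 \<inter> ?S a2 = {}"
  proof (rule ccontr)
    assume "?S a1 \<inter> ?S a2 \<noteq> {}"
    then obtain r where "r \<in> ?S a1" "r \<in> ?S a2" by blast
    then have "(a1,a2) \<in> r" "(a2,a1) \<in> r" "lin A r" using a1 a2 goodA_lin by blast+
    then show False using linD_antisym a2(2) by blast
  qed
  have f1: "finite (?S a1)" "finite (?S a2)" using fin_good[OF fin, of B] by (auto intro: finite_subset)
  have "cnt A B = card (?S a1) + card (?S a2)"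
    unfolding cnt_def split using card_Un_disjoint[OF f1 disj] .
  moreover have "card (?S a1) = cnt (A - {a1}) B"
  proof (rule card_last[OF fin a1(1)])
    fix r' assume "goodA (A - {a1}) B r'"
    then show "goodA A B (r' \<union> A \<times> {a1})"
    proof (rule ext_last_good[OF _ a1(1)])
      fix j k assume "j \<in> A" "k \<in> A" "a1 < j" "j < k"
      then show False using a1(2)[of j] by linarith
    next
      fix i k assume "i \<in> A" "k \<in> A" "i < a1" "a1 < k"
      then show "a1 \<in> B" using a1(2)[of k] by linarith
    qed
  qed
  moreover have "card (?S a2) = cnt (A - {a2}) B"
  proof (rule card_last[OF fin a2(1)])
    fix r' assume "goodA (A - {a2}) B r'"
    then show "goodA A B (r' \<union> A \<times> {a2})"
    proof (rule ext_last_good[OF _ a2(1)])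
      fix j k assume "j \<in> A" "k \<in> A" "a2 < j" "j < k"
      then show False using a1(2)[of k] a2(3)[of j] by fastforce
    next
      fix i k assume "i \<in> A" "k \<in> A" "i < a2" "a2 < k"
      then show "a2 \<in> B" using H by blast
    qed
  qed
  ultimately show ?thesis by simp
qed

lemma L2:
  assumes fin: "finite A" and b1: "b1 \<in> A" "\<And>y. y \<in> A \<Longrightarrow> b1 \<le> y"
    and b2: "b2 \<in> A" "b1 < b2" "\<And>y. y \<in> A \<Longrightarrow> y \<noteq> b1 \<Longrightarrow> b2 \<le> y"
    and H: "\<And>y. y \<in> A \<Longrightarrow> b2 < y \<Longrightarrow> b2 \<notin> B"
  shows "cnt A B = cnt (A - {b1}) B + cnt (A - {b2}) B"
proof -
  let ?S = "\<lambda>x. {r. goodA A B r \<and> (\<forall>y\<in>A. (x,y) \<in> r)}"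
  have split: "{r. goodA A B r} = ?S b1 \<union> ?S b2"
  proof
    show "{r. goodA A B r} \<subseteq> ?S b1 \<union> ?S b2"
    proof
      fix r assume "r \<in> {r. goodA A B r}"
      then have g: "goodA A B r" by blast
      have "A \<noteq> {}" using b1 by blast
      then obtain x where x: "x \<in> A" "\<forall>y\<in>A. (x,y) \<in> r" using has_min[OF fin _ goodA_lin[OF g]] by blast
      have "x = b1 \<or> x = b2"
      proof (rule ccontr)
        assume "\<not> (x = b1 \<or> x = b2)"
        then have "b2 < x" using b2(3)[OF x(1)] by linarith
        then have "b2 \<notin> B" using H x(1) by blast
        then show False using triD2[OF goodA_tri[OF g] b1(1) b2(1) x(1) b2(2) \<open>b2 < x\<close>] x b1 b2 by blast
      qed
      then show "r \<in> ?S b1 \<union> ?S b2" using g x by blast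
    qed
  qed blast
  have disj: "?S b1 \<inter> ?S b2 = {}"
  proof (rule ccontr)
    assume "?S b1 \<inter> ?S b2 \<noteq> {}"
    then obtain r where "r \<in> ?S b1" "r \<in> ?S b2" by blast
    then have "(b1,b2) \<in> r" "(b2,b1) \<in> r" "lin A r" using b1 b2 goodA_lin by blast+
    then show False using linD_antisym b2(2) by blast
  qed
  have f1: "finite (?S b1)" "finite (?S b2)" using fin_good[OF fin, of B] by (auto intro: finite_subset)
  have "cnt A B = card (?S b1) + card (?S b2)"
    unfolding cnt_def split using card_Un_disjoint[OF f1 disj] .
  moreover have "card (?S b1) = cnt (A - {b1}) B"
  proof (rule card_first[OF fin b1(1)])
    fix r' assume "goodA (A - {b1}) B r'"
    then show "goodA A B (r' \<union> {b1} \<times> A)"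
    proof (rule ext_first_good[OF _ b1(1)])
      fix i j assume "i \<in> A" "j \<in> A" "i < j" "j < b1"
      then show False using b1(2)[of j] by linarith
    next
      fix i k assume "i \<in> A" "k \<in> A" "i < b1" "b1 < k"
      then show "b1 \<notin> B" using b1(2)[of i] by linarith
    qed
  qed
  moreover have "card (?S b2) = cnt (A - {b2}) B"
  proof (rule card_first[OF fin b2(1)])
    fix r' assume "goodA (A - {b2}) B r'"
    then show "goodA A B (r' \<union> {b2} \<times> A)"
    proof (rule ext_first_good[OF _ b2(1)])
      fix i j assume "i \<in> A" "j \<in> A" "i < j" "j < b2"
      then show False using b1(2)[of i] b2(3)[of j] by fastforce
    next
      fix i k assume "i \<in> A" "k \<in> A" "i < b2" "b2 < k"
      then show "b2 \<notin> B" using H by blast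
    qed
  qed
  ultimately show ?thesis by simp
qed

definition upc :: "nat set \<Rightarrow> nat set \<Rightarrow> bool" where
  "upc A B \<longleftrightarrow> (\<forall>x\<in>A. \<forall>y\<in>A. x < y \<longrightarrow> x \<in> B \<longrightarrow> (\<exists>z\<in>A. y < z) \<longrightarrow> y \<in> B)"

lemma upc_subset: "upc A B \<Longrightarrow> A' \<subseteq> A \<Longrightarrow> upc A' B"
  unfolding upc_def by blast

lemma cnt_single: "cnt {a} B = 1"
proof -
  have "{r. goodA {a} B r} = {{(a,a)}}"
  proof
    show "{r. goodA {a} B r} \<subseteq> {{(a,a)}}"
    proof
      fix r assume "r \<in> {r. goodA {a} B r}"
      then have l: "lin {a} r" using goodA_lin by blast
      have "r \<subseteq> {a} \<times> {a}" using linD_sub'[OF l] .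
      moreover have "(a,a) \<in> r" using linD_refl[OF l] by blast
      ultimately show "r \<in> {{(a,a)}}" by blast
    qed
  next
    have "lin {a} {(a,a)}" by (rule linI) auto
    moreover have "tri {a} B {(a,a)}" by (rule triI) auto
    ultimately show "{{(a,a)}} \<subseteq> {r. goodA {a} B r}" unfolding goodA_def by blast
  qed
  then show ?thesis unfolding cnt_def by simp
qed

lemma main: "finite A \<Longrightarrow> A \<noteq> {} \<Longrightarrow> upc A B \<Longrightarrow> cnt A B = 2 ^ (card A - 1)"
proof (induction "card A" arbitrary: A rule: less_induct)
  case less
  note fin = less.prems(1) and ne = less.prems(2) and up = less.prems(3)
  show ?case
  proof (cases "card A = 1")
    case True
    then obtain a where "A = {a}" by (rule card_1_singletonE)
    then show ?thesis using cnt_single True by simp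
  next
    case False
    have c0: "card A \<noteq> 0" using fin ne by simp
    then have c2: "card A \<ge> 2" using False by linarith
    have IH': "cnt (A - {x}) B = 2 ^ (card A - 2)" if x: "x \<in> A" for x
    proof -
      have cx: "card (A - {x}) = card A - 1" using x fin by simp
      have "A - {x} \<noteq> {}"
      proof
        assume "A - {x} = {}"
        then have "card (A - {x}) = 0" by (simp only: card.empty)
        then show False using cx c2 by linarith
      qed
      moreover have "upc (A - {x}) B" using upc_subset[OF up] by blast
      moreover have "card (A - {x}) < card A" using cx c2 by linarith
      ultimately have "cnt (A - {x}) B = 2 ^ (card (A - {x}) - 1)"
        using less.hyps[of "A - {x}"] fin by blast
      then show ?thesis using cx by simp
    qed
    have pw: "2 ^ (card A - 2) + 2 ^ (card A - 2) = (2::nat) ^ (card A - 1)"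
    proof -
      obtain m where "card A = Suc (Suc m)" using c2 by (metis add_2_eq_Suc le_Suc_ex)
      then show ?thesis by simp
    qed
    define a1 where "a1 = Max A"
    have a1: "a1 \<in> A" "\<And>y. y \<in> A \<Longrightarrow> y \<le> a1" unfolding a1_def using fin ne by auto
    have ne1: "A - {a1} \<noteq> {}"
    proof
      assume "A - {a1} = {}"
      then have "A = {a1}" using a1 by blast
      then show False using c2 by simp
    qed
    define a2 where "a2 = Max (A - {a1})"
    have fa: "finite (A - {a1})" using fin by simp
    have a2': "a2 \<in> A - {a1}" "\<And>y. y \<in> A - {a1} \<Longrightarrow> y \<le> a2"
      unfolding a2_def using Max_in[OF fa ne1] Max_ge[OF fa] by blast+
    have a2: "a2 \<in> A" "a2 < a1" "\<And>y. y \<in> A \<Longrightarrow> y \<noteq> a1 \<Longrightarrow> y \<le> a2"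
      using a2' a1 by (auto simp: le_neq_implies_less)
    define b1 where "b1 = Min A"
    have b1: "b1 \<in> A" "\<And>y. y \<in> A \<Longrightarrow> b1 \<le> y" unfolding b1_def using fin ne by auto
    have ne2: "A - {b1} \<noteq> {}"
    proof
      assume "A - {b1} = {}"
      then have "A = {b1}" using b1 by blast
      then show False using c2 by simp
    qed
    define b2 where "b2 = Min (A - {b1})"
    have fb: "finite (A - {b1})" using fin by simp
    have b2': "b2 \<in> A - {b1}" "\<And>y. y \<in> A - {b1} \<Longrightarrow> b2 \<le> y"
      unfolding b2_def using Min_in[OF fb ne2] Min_le[OF fb] by blast+
    have b2: "b2 \<in> A" "b1 < b2" "\<And>y. y \<in> A \<Longrightarrow> y \<noteq> b1 \<Longrightarrow> b2 \<le> y"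
      using b2' b1 by (auto simp: le_neq_implies_less)
    show ?thesis
    proof (cases "\<forall>y\<in>A. y < a2 \<longrightarrow> a2 \<in> B")
      case True
      have "cnt A B = cnt (A - {a1}) B + cnt (A - {a2}) B"
        using L1[OF fin a1 a2] True by blast
      then show ?thesis using IH'[OF a1(1)] IH'[OF a2(1)] pw by simp
    next
      case False
      then obtain y where y: "y \<in> A" "y < a2" "a2 \<notin> B" by blast
      have H: "b2 \<notin> B" if "y' \<in> A" "b2 < y'" for y'
      proof
        assume b2B: "b2 \<in> B"
        have "a2 \<noteq> b1" using b1(2)[OF y(1)] y(2) by linarith
        then have "b2 \<le> a2" using b2(3) a2(1) by blast
        show False
        proof (cases "b2 = a2")
          case True then show False using b2B y by blast
        next
          case False
          then have "b2 < a2" using \<open>b2 \<le> a2\<close> by linarith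
          then have "a2 \<in> B" using up b2(1) a2(1) b2B a1(1) a2(2) unfolding upc_def by blast
          then show False using y by blast
        qed
      qed
      have "cnt A B = cnt (A - {b1}) B + cnt (A - {b2}) B"
        using L2[OF fin b1 b2] H by blast
      then show ?thesis using IH'[OF b1(1)] IH'[OF b2(1)] pw by simp
    qed
  qed
qed

theorem proposition8:
  fixes k n :: nat
  assumes "1 < k" and "k < n"
  shows "f n {k..n-1} = 2 ^ (n - 1)"
proof -
  have "f n {k..n-1} = cnt {1..n} {k..n-1}"
    unfolding f_def cnt_def using good_order_iff by presburger
  moreover have "upc {1..n} {k..n-1}" unfolding upc_def by auto
  moreover have "{1..n} \<noteq> ({} :: nat set)" using assms by auto
  ultimately show ?thesis using main[of "{1..n}" "{k..n-1}"] by simp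
qed

end
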